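(* Let $\mathbf{F}\in\{\mathbf{R},\mathbf{C}\}$, let $A_1,\dots,A_n\in\mathbf{H}_d$ be positive semidefinite, let $Z_*=X_*X_*^*$ with $X_*\in\mathbf{F}^{d\times r}$ be positive semidefinite of rank $r$ with eigendecomposition $Z_*=U\Lambda U^*$ ($U^*U=I_r$, smallest nonzero eigenvalue $\lambda_r(Z_* )>0$), let $\xi\in\mathbf{R}^n$ and $y=\mathcal{A}(Z_* )+\xi$. Suppose: (Dual certificate) for some $\epsilon\ge0$ there exists $\lambda\in\mathbf{R}^n$ such that $Y=\mathcal{A}^*(\lambda)$ satisfies $\mathcal{P}_{\mathcal{T}^\perp}(Y)\succeq P_U^\perp$ and $\|\mathcal{P}_{\mathcal{T}}(Y)\|_F\le\epsilon$; (Approximate isometry) for some $\mu_{\mathcal{T}},L_{\mathcal{T}}>0$, $\frac1{\sqrt n}\|\mathcal{A}(H)\|\ge\mu_{\mathcal{T}}\|\mathcal{P}_{\mathcal{T}}(H)\|_F-L_{\mathcal{T}}\operatorname{tr}(\mathcal{P}_{\mathcal{T}^\perp}(H))$ for all $H\in\mathbf{H}_d$ with $\mathcal{P}_{\mathcal{T}^\perp}(H)\succeq0$; and $\mu_{\mathcal{T}}>L_{\mathcal{T}}\epsilon$. Suppose the integer $p$ satisfies $$p>\tau:=2\Big(\frac{1+L_{\mathcal{T}}\sqrt n\|\lambda\|}{\mu_{\mathcal{T}}-L_{\mathcal{T}}\epsilon}\Big)^2\frac{\|\mathcal{A}^*(y)\|_{\mathrm{op}}}{n\lambda_r(Z_*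 )}-2 .$$ Then every second-order critical point $X\in\mathbf{F}^{d\times p}$ of $f_p(X)=\|y-\mathcal{A}(XX^* )\|^2$ satisfies $$\|XX^*-Z_*\|_F\le\|\mathcal{P}_{\mathcal{T}}(XX^*-Z_* )\|_F+\operatorname{tr}\mathcal{P}_{\mathcal{T}^\perp}(XX^* )\le\frac{p+2}{p-\tau}\Big(\frac{1+\epsilon+\sqrt n\|\lambda\|(L_{\mathcal{T}}+\mu_{\mathcal{T}})}{\mu_{\mathcal{T}}-L_{\mathcal{T}}\epsilon}\Big)^2\sqrt{2r}\,\frac{\|\mathcal{A}^*(\xi)\|_{\mathrm{op}}}{n}.$$
   Context: $\mathbf{H}_d$: $d\times d$ Hermitian matrices over $\mathbf{F}$ with real Frobenius inner product $\langle A,B\rangle=\operatorname{Re}\operatorname{tr}(A^*B)$. $\mathcal{A}(S)=(\langle A_1,S\rangle,\dots,\langle A_n,S\rangle)\in\mathbf{R}^n$, $\mathcal{A}^*(z)=\sum_iz_iA_i$. $P_U=UU^*$, $P_U^\perp=I_d-P_U$. $\mathcal{T}=\{UB^*+BU^*:B\in\mathbf{F}^{d\times r}\}\subset\mathbf{H}_d$, with orthogonal projections $\mathcal{P}_{\mathcal{T}}(S)=SP_U+P_USP_U^\perp$ and $\mathcal{P}_{\mathcal{T}^\perp}(S)=P_U^\perp SP_U^\perp$. A second-order critical point is a point where the gradient is zero and the Hessian is positive semidefinite (in the complex case, with respect to real and imaginary parts of $X$). *)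

theory Defs
  imports "HOL-Analysis.Analysis"
begin

text \<open>Matrices over F are represented as complex matrices (index types give the
dimensions); F is either the reals (entries in \<real>) or the complex numbers (UNIV).\<close>

definition in_F :: "complex set \<Rightarrow> complex^'c^'r \<Rightarrow> bool" where
  "in_F F M \<longleftrightarrow> (\<forall>i j. M $ i $ j \<in> F)"

definition cadj :: "complex^'c^'r \<Rightarrow> complex^'r^'c" where
  "cadj M = (\<chi> i j. cnj (M $ j $ i))"

definition hinner :: "complex^'d^'d \<Rightarrow> complex^'d^'d \<Rightarrow> real" where
  "hinner A B = Re (trace (cadj A ** B))"

definition fro_norm :: "complex^'c^'r \<Rightarrow> real" where
  "fro_norm M = sqrt (\<Sum>i\<in>UNIV. \<Sum>j\<in>UNIV. (cmod (M $ i $ j))\<^sup>2)"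

definition op_norm :: "complex^'c^'r \<Rightarrow> real" where
  "op_norm M = onorm (\<lambda>v. M *v v)"

definition hermitian :: "complex^'d^'d \<Rightarrow> bool" where
  "hermitian M \<longleftrightarrow> cadj M = M"

definition herm_F :: "complex set \<Rightarrow> complex^'d^'d \<Rightarrow> bool" where
  "herm_F F M \<longleftrightarrow> in_F F M \<and> hermitian M"

definition psd :: "complex^'d^'d \<Rightarrow> bool" where
  "psd M \<longleftrightarrow> hermitian M \<and> (\<forall>v::complex^'d. 0 \<le> Re (\<Sum>i\<in>UNIV. cnj (v $ i) * (M *v v) $ i))"

definition loewner_ge :: "complex^'d^'d \<Rightarrow> complex^'d^'d \<Rightarrow> bool" where
  "loewner_ge S T \<longleftrightarrow> psd (S - T)"

definition min_nonzero_eig :: "complex^'d^'d \<Rightarrow> real" where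
  "min_nonzero_eig Z = Min {\<mu>::real. \<mu> \<noteq> 0 \<and> (\<exists>v. v \<noteq> 0 \<and> Z *v v = complex_of_real \<mu> *s v)}"

definition meas :: "('n \<Rightarrow> complex^'d^'d) \<Rightarrow> complex^'d^'d \<Rightarrow> real^'n" where
  "meas A S = (\<chi> i. hinner (A i) S)"

definition meas_adj :: "('n::finite \<Rightarrow> complex^'d^'d) \<Rightarrow> real^'n \<Rightarrow> complex^'d^'d" where
  "meas_adj A z = (\<Sum>i\<in>UNIV. (z $ i) *\<^sub>R A i)"

definition projU :: "complex^'r^'d \<Rightarrow> complex^'d^'d" where
  "projU U = U ** cadj U"

definition projU_perp :: "complex^'r^'d \<Rightarrow> complex^'d^'d" where
  "projU_perp U = mat 1 - projU U"

definition P_T :: "complex^'r^'d \<Rightarrow> complex^'d^'d \<Rightarrow> complex^'d^'d" where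
  "P_T U S = S ** projU U + projU U ** S ** projU_perp U"

definition P_Tperp :: "complex^'r^'d \<Rightarrow> complex^'d^'d \<Rightarrow> complex^'d^'d" where
  "P_Tperp U S = projU_perp U ** S ** projU_perp U"

text \<open>second-order critical point of a real-valued f on F^{d\<times>p}: in every real
direction D (entries in F, i.e. w.r.t. real and imaginary parts in the complex case)
the first directional derivative vanishes (zero gradient) and the second
directional derivative is nonnegative (PSD Hessian).\<close>
definition socp :: "complex set \<Rightarrow> (complex^'p^'d \<Rightarrow> real) \<Rightarrow> complex^'p^'d \<Rightarrow> bool" where
  "socp F f X \<longleftrightarrow> in_F F X \<and>
     (\<forall>D. in_F F D \<longrightarrow>
        deriv (\<lambda>t. f (X + t *\<^sub>R D)) 0 = 0 \<and>
        0 \<le> deriv (deriv (\<lambda>t. f (X + t *\<^sub>R D))) 0)"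

end

theory Submission
  imports Defs
begin


lemma inner_mat: "inner (M::complex^'c^'r) N = (\<Sum>i\<in>UNIV. \<Sum>j\<in>UNIV. Re (cnj (M$i$j) * N$i$j))"
  by (simp add: inner_vec_def inner_complex_def)

lemma inner_cvec: "inner (u::complex^'d) v = (\<Sum>i\<in>UNIV. Re (cnj (u$i) * v$i))"
  by (simp add: inner_vec_def inner_complex_def)

lemma norm_sq_mat: "(norm (M::complex^'c^'r))\<^sup>2 = (\<Sum>i\<in>UNIV. \<Sum>j\<in>UNIV. (cmod (M$i$j))\<^sup>2)"
  by (simp add: norm_vec_def L2_set_def sum_nonneg)

lemma fro_norm_eq: "fro_norm M = norm M"
  unfolding fro_norm_def using norm_sq_mat[of M] by (metis norm_ge_zero real_sqrt_unique)

lemma inner_trace: "inner (M::complex^'c^'r) N = Re (trace (cadj M ** N))"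
proof -
  have "trace (cadj M ** N) = (\<Sum>j\<in>UNIV. \<Sum>i\<in>UNIV. cnj (M$i$j) * N$i$j)"
    unfolding trace_def cadj_def matrix_matrix_mult_def by simp
  also have "\<dots> = (\<Sum>i\<in>UNIV. \<Sum>j\<in>UNIV. cnj (M$i$j) * N$i$j)"
    by (rule sum.swap)
  finally show ?thesis unfolding inner_mat by (simp add: Re_sum)
qed

lemma hinner_eq: "hinner A B = inner A B"
  by (simp add: hinner_def inner_trace)

lemma psd_iff: "psd M \<longleftrightarrow> hermitian M \<and> (\<forall>v. 0 \<le> inner v (M *v v))"
  by (simp add: psd_def inner_cvec Re_sum)

lemma cadj_nth[simp]: "cadj M $ i $ j = cnj (M $ j $ i)"
  by (simp add: cadj_def)

lemma cadj_cadj[simp]: "cadj (cadj M) = M"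
  by (simp add: vec_eq_iff)

lemma cadj_mult: "cadj (A ** B) = cadj B ** cadj (A::complex^'n^'m)"
  by (simp add: vec_eq_iff matrix_matrix_mult_def mult.commute)

lemma cadj_add[simp]: "cadj (A + B) = cadj A + cadj B"
  by (simp add: vec_eq_iff)

lemma cadj_diff[simp]: "cadj (A - B) = cadj A - cadj B"
  by (simp add: vec_eq_iff)

lemma cadj_scaleR[simp]: "cadj (c *\<^sub>R A) = c *\<^sub>R cadj A"
  by (simp add: vec_eq_iff)

lemma cadj_zero[simp]: "cadj 0 = 0"
  by (simp add: vec_eq_iff)

lemma cadj_mat1[simp]: "cadj (mat 1 :: complex^'n^'n) = mat 1"
  by (simp add: vec_eq_iff mat_def)

lemma cadj_sum: "cadj (sum f S) = sum (\<lambda>x. cadj (f x)) S"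
  by (induction S rule: infinite_finite_induct) auto

lemma norm_cadj[simp]: "norm (cadj (M::complex^'c^'r)) = norm M"
proof -
  have "(norm (cadj M))\<^sup>2 = (norm M)\<^sup>2"
    unfolding norm_sq_mat by (simp, rule sum.swap)
  then show ?thesis by (simp add: power2_eq_iff_nonneg)
qed

lemma inner_cadj: "inner (cadj M) (cadj N) = inner (M::complex^'c^'r) N"
proof -
  have "inner (cadj M) (cadj N) = (\<Sum>j\<in>UNIV. \<Sum>i\<in>UNIV. Re (cnj (M$i$j) * N$i$j))"
    unfolding inner_mat by (simp add: mult.commute)
  also have "\<dots> = inner M N" unfolding inner_mat by (rule sum.swap)
  finally show ?thesis .
qed

lemma inner_move_left: "inner (A::complex^'p^'m) ((B::complex^'n^'m) ** C) = inner (cadj B ** A) C"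
  unfolding inner_trace cadj_mult cadj_cadj by (simp add: matrix_mul_assoc)

lemma inner_move_right: "inner (A::complex^'p^'m) ((B::complex^'n^'m) ** C) = inner (A ** cadj C) B"
proof -
  have "trace (cadj A ** (B ** C)) = trace (C ** cadj A ** B)"
    using trace_mul_sym[of "cadj A ** B" C] by (simp add: matrix_mul_assoc)
  then show ?thesis unfolding inner_trace cadj_mult cadj_cadj by (simp add: matrix_mul_assoc)
qed

lemma inner_vmove: "inner (u::complex^'m) ((B::complex^'n^'m) *v v) = inner (cadj B *v u) v"
proof -
  have "(\<Sum>i\<in>UNIV. cnj (u$i) * (B *v v)$i) = (\<Sum>i\<in>UNIV. \<Sum>j\<in>UNIV. cnj (u$i) * B$i$j * v$j)"
    by (simp add: matrix_vector_mult_def sum_distrib_left mult.assoc)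
  also have "\<dots> = (\<Sum>j\<in>UNIV. \<Sum>i\<in>UNIV. cnj (u$i) * B$i$j * v$j)" by (rule sum.swap)
  also have "\<dots> = (\<Sum>j\<in>UNIV. cnj ((cadj B *v u)$j) * v$j)"
    by (simp add: matrix_vector_mult_def sum_distrib_right sum_distrib_left mult_ac)
  finally show ?thesis by (simp only: inner_cvec Re_sum[symmetric])
qed

lemma mm_add_r: "((A::complex^'n^'m) + B) ** C = A ** C + B ** C"
  by (simp add: vec_eq_iff matrix_matrix_mult_def distrib_right sum.distrib)
lemma mm_add_l: "(A::complex^'n^'m) ** (B + C) = A ** B + A ** C"
  by (rule matrix_add_ldistrib)
lemma mm_diff_r: "((A::complex^'n^'m) - B) ** C = A ** C - B ** C"
  by (simp add: vec_eq_iff matrix_matrix_mult_def left_diff_distrib sum_subtractf)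
lemma mm_diff_l: "(A::complex^'n^'m) ** (B - C) = A ** B - A ** C"
  by (simp add: vec_eq_iff matrix_matrix_mult_def right_diff_distrib sum_subtractf)
lemma mm_scaleR_l: "(c *\<^sub>R (A::complex^'n^'m)) ** B = c *\<^sub>R (A ** B)"
  by (simp add: scalar_matrix_assoc)
lemma mm_scaleR_r: "(A::complex^'n^'m) ** (c *\<^sub>R B) = c *\<^sub>R (A ** B)"
  by (simp add: matrix_scalar_ac scalar_matrix_assoc)
lemma mm_zero_l[simp]: "(0::complex^'n^'m) ** B = 0" by simp
lemma mm_sum_r: "(sum f S :: complex^'n^'m) ** B = (\<Sum>x\<in>S. f x ** B)"
  by (induction S rule: infinite_finite_induct) (auto simp: mm_add_r)

lemmas mm_simps = mm_add_r mm_add_l mm_diff_r mm_diff_l mm_scaleR_l mm_scaleR_r matrix_mul_assoc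

lemma hermitian_iff: "hermitian M \<longleftrightarrow> cadj M = M" by (simp add: hermitian_def)

lemma herm_WW: "hermitian (B ** cadj B)"
  by (simp add: hermitian_def cadj_mult)

context
  fixes U :: "complex^'r^'d"
  assumes orth: "cadj U ** U = mat 1"
begin

lemma PP: "projU U ** projU U = projU U"
  unfolding projU_def by (metis matrix_mul_assoc matrix_mul_rid orth)
lemma PU: "projU U ** U = U"
  unfolding projU_def by (metis matrix_mul_assoc matrix_mul_rid orth)
lemma QU: "projU_perp U ** U = 0"
  unfolding projU_perp_def by (simp add: mm_diff_r PU)
lemma PQ: "projU U ** projU_perp U = 0"
  unfolding projU_perp_def by (simp add: mm_diff_l PP)
lemma QP: "projU_perp U ** projU U = 0"
  unfolding projU_perp_def by (simp add: mm_diff_r PP)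
lemma QQ: "projU_perp U ** projU_perp U = projU_perp U"
  using PQ unfolding projU_perp_def by (simp add: mm_diff_r)
lemma cadjP: "cadj (projU U) = projU U"
  unfolding projU_def by (simp add: cadj_mult)
lemma cadjQ: "cadj (projU_perp U) = projU_perp U"
  unfolding projU_perp_def by (simp add: cadjP)
lemma PplusQ: "projU U + projU_perp U = mat 1"
  unfolding projU_perp_def by simp

lemma PT_plus_PTperp: "P_T U M + P_Tperp U M = M"
proof -
  have "(projU U + projU_perp U) ** M ** projU_perp U = M ** projU_perp U" by (simp add: PplusQ)
  then have 1: "projU U ** M ** projU_perp U + projU_perp U ** M ** projU_perp U = M ** projU_perp U"
    by (simp add: mm_add_r)
  have 2: "M ** projU U + M ** projU_perp U = M" using mm_add_l[of M "projU U" "projU_perp U"] by (simp add: PplusQ)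
  show ?thesis unfolding P_T_def P_Tperp_def using 1 2 by (simp add: add.assoc)
qed

lemma PTperp_PT: "P_Tperp U (P_T U M) = 0"
proof -
  have "projU_perp U ** (M ** projU U + projU U ** M ** projU_perp U) ** projU_perp U
     = projU_perp U ** M ** (projU U ** projU_perp U) + (projU_perp U ** projU U) ** M ** (projU_perp U ** projU_perp U)"
    by (simp add: mm_simps)
  then show ?thesis unfolding P_Tperp_def P_T_def by (simp add: PQ QP)
qed

lemma inner_PTperp: "inner (P_Tperp U G) K = inner G (P_Tperp U K)"
proof -
  have "inner G (P_Tperp U K) = inner G (projU_perp U ** (K ** projU_perp U))"
    unfolding P_Tperp_def by (simp add: matrix_mul_assoc)
  also have "\<dots> = inner (projU_perp U ** G) (K ** projU_perp U)"
    by (simp add: inner_move_left cadjQ)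
  also have "\<dots> = inner (projU_perp U ** G ** projU_perp U) K"
    by (simp add: inner_move_right cadjQ)
  finally show ?thesis unfolding P_Tperp_def by simp
qed

lemma inner_PT: "inner G (P_T U M) = inner (P_T U G) (P_T U M)"
proof -
  have "inner G (P_T U M) = inner (P_T U G + P_Tperp U G) (P_T U M)"
    by (simp add: PT_plus_PTperp)
  also have "\<dots> = inner (P_T U G) (P_T U M)"
    by (simp add: inner_add_left inner_PTperp PTperp_PT)
  finally show ?thesis .
qed

lemma norm_add_sq: "(norm (A + B))\<^sup>2 = (norm A)\<^sup>2 + (norm B)\<^sup>2 + 2 * inner A B"
  for A B :: "complex^'c^'q"
  by (simp add: power2_norm_eq_inner inner_add_left inner_add_right inner_commute)

lemma norm_PT_sq: "(norm (P_T U M))\<^sup>2 = (norm (M ** projU U))\<^sup>2 + (norm (projU U ** M ** projU_perp U))\<^sup>2"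
proof -
  have "inner (M ** projU U) ((projU U ** M) ** projU_perp U) = inner (M ** (projU U ** projU_perp U)) (projU U ** M)"
    by (simp add: inner_move_right cadjQ matrix_mul_assoc)
  then have "inner (M ** projU U) (projU U ** M ** projU_perp U) = 0" by (simp add: PQ)
  then show ?thesis unfolding P_T_def by (simp add: norm_add_sq)
qed

lemma norm_MP: "norm (M ** projU U) = norm (M ** U)"
proof -
  have "inner (M ** projU U) (M ** projU U) = inner (M ** U ** cadj U) ((M ** U) ** cadj U)"
    unfolding projU_def by (simp add: matrix_mul_assoc)
  also have "\<dots> = inner (M ** U ** (cadj U ** U)) (M ** U)"
    by (simp add: inner_move_right matrix_mul_assoc)
  finally have "(norm (M ** projU U))\<^sup>2 = (norm (M ** U))\<^sup>2"
    by (simp add: power2_norm_eq_inner orth)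
  then show ?thesis by (simp add: power2_eq_iff_nonneg)
qed

lemma norm_QM_le: "norm (projU_perp U ** M) \<le> norm M"
proof -
  have "inner (projU U ** M) (projU_perp U ** M) = inner (projU_perp U ** projU U ** M) M"
    by (simp add: inner_move_left cadjQ matrix_mul_assoc)
  then have 0: "inner (projU U ** M) (projU_perp U ** M) = 0" by (simp add: QP)
  have "M = projU U ** M + projU_perp U ** M"
    by (metis PplusQ matrix_mul_lid mm_add_r)
  then have "(norm M)\<^sup>2 = (norm (projU U ** M))\<^sup>2 + (norm (projU_perp U ** M))\<^sup>2"
    using 0 by (metis norm_add_sq mult_zero_right add_0_right)
  then have "(norm (projU_perp U ** M))\<^sup>2 \<le> (norm M)\<^sup>2" by simp
  then show ?thesis by (simp add: power2_le_iff_abs_le)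
qed

lemma norm_PGQ_le: assumes "hermitian G" shows "norm (projU U ** G ** projU_perp U) \<le> norm (G ** projU U)"
proof -
  have "cadj (projU U ** G ** projU_perp U) = projU_perp U ** (G ** projU U)"
    using assms by (simp add: cadj_mult cadjP cadjQ hermitian_def matrix_mul_assoc)
  then have "norm (projU U ** G ** projU_perp U) = norm (projU_perp U ** (G ** projU U))"
    by (metis norm_cadj)
  then show ?thesis using norm_QM_le by simp
qed

end


lemma norm_sq_cvec: "(norm (v::complex^'d))\<^sup>2 = (\<Sum>i\<in>UNIV. (cmod (v$i))\<^sup>2)"
  by (simp add: norm_vec_def L2_set_def sum_nonneg)

lemma inner_cols: "inner (M::complex^'c^'r) N = (\<Sum>j\<in>UNIV. inner (column j M) (column j N))"
  unfolding inner_mat inner_cvec column_def by (simp, rule sum.swap)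

lemma norm_sq_cols: "(norm (M::complex^'c^'r))\<^sup>2 = (\<Sum>j\<in>UNIV. (norm (column j M))\<^sup>2)"
  by (simp add: power2_norm_eq_inner inner_cols[of M M])

lemma column_mm: "column j (M ** B) = M *v column j B"
  by (simp add: column_def matrix_matrix_mult_def matrix_vector_mult_def vec_eq_iff)

lemma inner_WW: "inner (G::complex^'d^'d) (B ** cadj B) = (\<Sum>j\<in>UNIV. inner (column j B) (G *v column j B))"
proof -
  have "inner G (B ** cadj B) = inner (G ** B) B"
    by (simp add: inner_move_right)
  also have "\<dots> = (\<Sum>j\<in>UNIV. inner (G *v column j B) (column j B))"
    by (simp add: inner_cols[of "G ** B"] column_mm)
  finally show ?thesis by (simp add: inner_commute)
qed

lemma q_WW: "inner v ((B ** cadj B) *v v) = (norm (cadj B *v v))\<^sup>2"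
  by (simp add: matrix_vector_mul_assoc[symmetric] inner_vmove power2_norm_eq_inner)

lemma psd_WW: "psd (B ** cadj B)"
  unfolding psd_iff by (simp add: herm_WW q_WW)

lemma bl_mv: "bounded_linear (\<lambda>v::complex^'d. (G::complex^'d^'e) *v v)"
  using linear_conv_bounded_linear matrix_vector_mul_linear by blast

lemma op_norm_nonneg: "0 \<le> op_norm G"
  unfolding op_norm_def using onorm_pos_le[OF bl_mv] .

lemma norm_mv_le: "norm (G *v v) \<le> op_norm G * norm v"
  unfolding op_norm_def using onorm[OF bl_mv] .

lemma q_le_op: "\<bar>inner v (G *v v)\<bar> \<le> op_norm G * (norm v)\<^sup>2"
proof -
  have "\<bar>inner v (G *v v)\<bar> \<le> norm v * norm (G *v v)" by (rule Cauchy_Schwarz_ineq2)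
  also have "\<dots> \<le> norm v * (op_norm G * norm v)" by (simp add: mult_left_mono norm_mv_le)
  finally show ?thesis by (simp add: power2_eq_square mult_ac)
qed

lemma mv_scaleR: "(A::complex^'n^'m) *v (c *\<^sub>R x) = c *\<^sub>R (A *v x)"
  using linear_scale[OF matrix_vector_mul_linear[of A]] by simp

lemma herm_inner_swap: assumes "hermitian A" shows "inner x (A *v u) = inner u (A *v x)"
proof -
  have "inner x (A *v u) = inner (cadj A *v x) u" by (rule inner_vmove)
  then show ?thesis using assms by (simp add: hermitian_def inner_commute)
qed

lemma psd_CS: assumes "psd A"
  shows "(inner u (A *v x))\<^sup>2 \<le> inner u (A *v u) * inner x (A *v x)"
proof -
  define a where "a = inner u (A *v u)"
  define b where "b = inner u (A *v x)"
  define c where "c = inner x (A *v x)"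
  have herm: "hermitian A" and q: "\<And>v. 0 \<le> inner v (A *v v)" using assms by (auto simp: psd_iff)
  have quad: "0 \<le> a + 2 * t * b + t\<^sup>2 * c" for t :: real
  proof -
    have "inner (u + t *\<^sub>R x) (A *v (u + t *\<^sub>R x)) = a + t * inner x (A *v u) + t * b + t\<^sup>2 * c"
      by (simp add: a_def b_def c_def matrix_vector_right_distrib inner_add_left inner_add_right
          mv_scaleR power2_eq_square algebra_simps)
    then show ?thesis using q[of "u + t *\<^sub>R x"] herm_inner_swap[OF herm, of x u] b_def by simp
  qed
  have c0: "0 \<le> c" using q c_def by simp
  show ?thesis
  proof (cases "c = 0")
    case True
    have "b = 0"
    proof (rule ccontr)
      assume "b \<noteq> 0"
      have "0 \<le> a + 2 * (-(a + 1) / (2 * b)) * b" using quad[of "-(a + 1) / (2 * b)"] True by simp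
      then show False using \<open>b \<noteq> 0\<close> by (simp add: field_simps)
    qed
    then show ?thesis using True b_def c_def by simp
  next
    case False
    then have cp: "c > 0" using c0 by simp
    have "0 \<le> a + 2 * (- b / c) * b + (- b / c)\<^sup>2 * c" by (rule quad)
    then have "0 \<le> a - b\<^sup>2 / c" using cp by (simp add: power2_eq_square field_simps)
    then have "b\<^sup>2 \<le> a * c" using cp by (simp add: field_simps)
    then show ?thesis by (simp add: a_def b_def c_def)
  qed
qed


lemma cmod_sum_le_L2: "cmod (\<Sum>c\<in>UNIV. x $ c * cnj (y $ c)) \<le> norm (x::complex^'c) * norm (y::complex^'c)"
proof -
  have "cmod (\<Sum>c\<in>UNIV. x $ c * cnj (y $ c)) \<le> (\<Sum>c\<in>UNIV. cmod (x$c) * cmod (y$c))"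
    by (rule order_trans[OF norm_sum]) (simp add: norm_mult)
  also have "\<dots> = (\<Sum>c\<in>UNIV. \<bar>cmod (x$c)\<bar> * \<bar>cmod (y$c)\<bar>)" by simp
  also have "\<dots> \<le> L2_set (\<lambda>c. cmod (x$c)) UNIV * L2_set (\<lambda>c. cmod (y$c)) UNIV"
    by (rule L2_set_mult_ineq)
  finally show ?thesis by (simp add: norm_vec_def)
qed

lemma norm_BBt: "norm (B ** cadj (B::complex^'c^'r)) \<le> (norm B)\<^sup>2"
proof -
  have e: "cmod ((B ** cadj B)$a$b) \<le> norm (B$a) * norm (B$b)" for a b
    unfolding matrix_matrix_mult_def using cmod_sum_le_L2[of "B$a" "B$b"] by simp
  have "(norm (B ** cadj B))\<^sup>2 = (\<Sum>a\<in>UNIV. \<Sum>b\<in>UNIV. (cmod ((B ** cadj B)$a$b))\<^sup>2)"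
    by (rule norm_sq_mat)
  also have "\<dots> \<le> (\<Sum>a\<in>UNIV. \<Sum>b\<in>UNIV. (norm (B$a))\<^sup>2 * (norm (B$b))\<^sup>2)"
    apply (intro sum_mono)
    using e by (metis norm_ge_zero power_mono power_mult_distrib)
  also have "\<dots> = ((norm B)\<^sup>2)\<^sup>2"
    by (simp add: norm_vec_def L2_set_def sum_nonneg power2_eq_square sum_product)
  finally have "(norm (B ** cadj B))\<^sup>2 \<le> ((norm B)\<^sup>2)\<^sup>2" .
  then show ?thesis by (rule power2_le_imp_le) simp
qed

lemma meas_nth: "meas A M $ i = inner (A i) M"
  by (simp add: meas_def hinner_eq)
lemma meas_add: "meas A (M + N) = meas A M + meas A N"
  by (simp add: vec_eq_iff meas_nth inner_add_right)
lemma meas_diff: "meas A (M - N) = meas A M - meas A N"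
  by (simp add: vec_eq_iff meas_nth inner_diff_right)
lemma meas_scaleR: "meas A (c *\<^sub>R M) = c *\<^sub>R meas A M"
  by (simp add: vec_eq_iff meas_nth)

lemma meas_adj_add: "meas_adj A (z + w) = meas_adj A z + meas_adj A w"
  by (simp add: meas_adj_def scaleR_add_left sum.distrib)
lemma meas_adj_diff: "meas_adj A (z - w) = meas_adj A z - meas_adj A w"
  by (simp add: meas_adj_def scaleR_diff_left sum_subtractf)

lemma inner_meas_adj: "inner (meas_adj A z) H = (\<Sum>i\<in>UNIV. z$i * inner (A i) H)"
  by (simp add: meas_adj_def inner_sum_left)

lemma adjoint: "inner z (meas A H) = inner (meas_adj A z) H"
  by (simp add: inner_meas_adj inner_vec_def[of z] meas_nth)

lemma mv_sum_l: "(sum f S :: complex^'n^'m) *v v = (\<Sum>x\<in>S. f x *v v)"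
  by (induction S rule: infinite_finite_induct) (auto simp: matrix_vector_mult_add_rdistrib)

lemma mv_scaleR_l: "(c *\<^sub>R (M::complex^'n^'m)) *v v = c *\<^sub>R (M *v v)"
  by (simp add: vec_eq_iff matrix_vector_mult_def scaleR_sum_right)

lemma q_meas_adj: "inner v (meas_adj A z *v v) = (\<Sum>i\<in>UNIV. z$i * inner v (A i *v v))"
proof -
  have "meas_adj A z *v v = (\<Sum>i\<in>UNIV. z$i *\<^sub>R (A i *v v))"
    unfolding meas_adj_def by (simp add: mv_sum_l mv_scaleR_l)
  then show ?thesis by (simp add: inner_sum_right)
qed

lemma herm_meas_adj: "(\<And>i. hermitian (A i)) \<Longrightarrow> hermitian (meas_adj A z)"
  by (simp add: hermitian_def meas_adj_def cadj_sum)


definition Fok :: "complex set \<Rightarrow> bool" where "Fok F \<longleftrightarrow> F = \<real> \<or> F = UNIV"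

definition vin_F :: "complex set \<Rightarrow> complex^'d \<Rightarrow> bool" where "vin_F F v \<longleftrightarrow> (\<forall>i. v$i \<in> F)"

context fixes F assumes Fok: "Fok F"
begin

lemma F_add: "a \<in> F \<Longrightarrow> b \<in> F \<Longrightarrow> a + b \<in> F"
  using Fok by (auto simp: Fok_def)
lemma F_diff: "a \<in> F \<Longrightarrow> b \<in> F \<Longrightarrow> a - b \<in> F"
  using Fok by (auto simp: Fok_def)
lemma F_mult: "a \<in> F \<Longrightarrow> b \<in> F \<Longrightarrow> a * b \<in> F"
  using Fok by (auto simp: Fok_def)
lemma F_cnj: "a \<in> F \<Longrightarrow> cnj a \<in> F"
  using Fok by (auto simp: Fok_def Reals_cnj_iff)
lemma F_real: "complex_of_real c \<in> F"
  using Fok by (auto simp: Fok_def)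
lemma F_0: "0 \<in> F" using F_real[of 0] by simp
lemma F_1: "1 \<in> F" using F_real[of 1] by simp
lemma F_sum: "(\<And>x. x \<in> S \<Longrightarrow> f x \<in> F) \<Longrightarrow> sum f S \<in> F"
  by (induction S rule: infinite_finite_induct) (auto simp: F_0 F_add)
lemma F_scaleR: "a \<in> F \<Longrightarrow> c *\<^sub>R a \<in> F"
  by (simp add: scaleR_conv_of_real F_mult F_real)

lemma inF_add: "in_F F A \<Longrightarrow> in_F F B \<Longrightarrow> in_F F (A + B)"
  by (simp add: in_F_def F_add)
lemma inF_diff: "in_F F A \<Longrightarrow> in_F F B \<Longrightarrow> in_F F (A - B)"
  by (simp add: in_F_def F_diff)
lemma inF_mult: "in_F F A \<Longrightarrow> in_F F B \<Longrightarrow> in_F F (A ** B)"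
  by (simp add: in_F_def matrix_matrix_mult_def F_mult F_sum)
lemma inF_cadj: "in_F F A \<Longrightarrow> in_F F (cadj A)"
  by (simp add: in_F_def F_cnj)
lemma inF_scaleR: "in_F F A \<Longrightarrow> in_F F (c *\<^sub>R A)"
  by (simp add: in_F_def F_scaleR)
lemma inF_sum: "(\<And>x. x \<in> S \<Longrightarrow> in_F F (f x)) \<Longrightarrow> in_F F (sum f S)"
  by (simp add: in_F_def sum_component F_sum)
lemma inF_mat1: "in_F F (mat 1)"
  by (simp add: in_F_def mat_def F_0 F_1)
lemma vinF_mv: "in_F F A \<Longrightarrow> vin_F F v \<Longrightarrow> vin_F F (A *v v)"
  by (simp add: in_F_def vin_F_def matrix_vector_mult_def F_mult F_sum)
lemma vinF_col: "in_F F A \<Longrightarrow> vin_F F (column j A)"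
  by (simp add: in_F_def vin_F_def column_def)
lemma vinF_diff: "vin_F F a \<Longrightarrow> vin_F F b \<Longrightarrow> vin_F F (a - b)"
  by (simp add: vin_F_def F_diff)
lemma vinF_scaleR: "vin_F F a \<Longrightarrow> vin_F F (c *\<^sub>R a)"
  by (simp add: vin_F_def F_scaleR)

end


lemma poly4_deriv:
  fixes a0 a1 a2 a3 a4 :: real
  assumes g: "g = (\<lambda>t. a0 + a1*t + a2*t\<^sup>2 + a3*t^3 + a4*t^4)"
  shows "deriv g 0 = a1" "deriv (deriv g) 0 = 2*a2"
proof -
  have d: "deriv g = (\<lambda>t. a1 + 2*a2*t + 3*a3*t\<^sup>2 + 4*a4*t^3)"
  proof
    fix t :: real
    show "deriv g t = a1 + 2*a2*t + 3*a3*t\<^sup>2 + 4*a4*t^3"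
      unfolding g
      by (rule DERIV_imp_deriv) (auto intro!: derivative_eq_intros simp: power2_eq_square power3_eq_cube algebra_simps)
  qed
  show "deriv g 0 = a1" by (simp add: d)
  have "deriv (deriv g) 0 = 2*a2"
    unfolding d
    by (rule DERIV_imp_deriv) (auto intro!: derivative_eq_intros)
  then show "deriv (deriv g) 0 = 2*a2" .
qed

lemma expand_XD: "(X + t *\<^sub>R D) ** cadj (X + t *\<^sub>R D)
   = X ** cadj X + t *\<^sub>R (X ** cadj D + D ** cadj X) + t\<^sup>2 *\<^sub>R (D ** cadj D)"
  for X D :: "complex^'p^'d"
  by (simp add: mm_add_r mm_add_l mm_scaleR_l mm_scaleR_r scaleR_add_right power2_eq_square algebra_simps)

lemma norm_poly: "(norm (v0 - t *\<^sub>R v1 - t\<^sup>2 *\<^sub>R v2))\<^sup>2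
   = (norm v0)\<^sup>2 + (-2 * inner v0 v1) * t + ((norm v1)\<^sup>2 - 2 * inner v0 v2) * t\<^sup>2
     + (2 * inner v1 v2) * t^3 + (norm v2)\<^sup>2 * t^4"
  for v0 v1 v2 :: "real^'n"
  unfolding power2_norm_eq_inner
  by (simp add: inner_diff_left inner_diff_right inner_commute[of v1 v0]
      inner_commute[of v2 v0] inner_commute[of v2 v1] power2_eq_square power3_eq_cube
      power4_eq_xxxx algebra_simps)

lemma crit_conds:
  fixes A :: "'n::finite \<Rightarrow> complex^'d::finite^'d" and X D :: "complex^'p::finite^'d"
  assumes crit: "socp F (\<lambda>W. (norm (y - meas A (W ** cadj W)))\<^sup>2) X"
    and D: "in_F F D"
  shows "inner (y - meas A (X ** cadj X)) (meas A (X ** cadj D + D ** cadj X)) = 0"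
    "0 \<le> (norm (meas A (X ** cadj D + D ** cadj X)))\<^sup>2
          - 2 * inner (y - meas A (X ** cadj X)) (meas A (D ** cadj D))"
proof -
  define v0 where "v0 = y - meas A (X ** cadj X)"
  define v1 where "v1 = meas A (X ** cadj D + D ** cadj X)"
  define v2 where "v2 = meas A (D ** cadj D)"
  have g: "(\<lambda>t. (norm (y - meas A ((X + t *\<^sub>R D) ** cadj (X + t *\<^sub>R D))))\<^sup>2)
     = (\<lambda>t. (norm v0)\<^sup>2 + (-2 * inner v0 v1) * t + ((norm v1)\<^sup>2 - 2 * inner v0 v2) * t\<^sup>2
     + (2 * inner v1 v2) * t^3 + (norm v2)\<^sup>2 * t^4)"
  proof
    fix t :: real
    have "y - meas A ((X + t *\<^sub>R D) ** cadj (X + t *\<^sub>R D)) = v0 - t *\<^sub>R v1 - t\<^sup>2 *\<^sub>R v2"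
      unfolding expand_XD v0_def v1_def v2_def by (simp add: meas_add meas_scaleR algebra_simps)
    then show "(norm (y - meas A ((X + t *\<^sub>R D) ** cadj (X + t *\<^sub>R D))))\<^sup>2 =
      (norm v0)\<^sup>2 + (-2 * inner v0 v1) * t + ((norm v1)\<^sup>2 - 2 * inner v0 v2) * t\<^sup>2
     + (2 * inner v1 v2) * t^3 + (norm v2)\<^sup>2 * t^4" by (simp add: norm_poly)
  qed
  from crit D have c1: "deriv (\<lambda>t. (norm (y - meas A ((X + t *\<^sub>R D) ** cadj (X + t *\<^sub>R D))))\<^sup>2) 0 = 0"
    and c2: "0 \<le> deriv (deriv (\<lambda>t. (norm (y - meas A ((X + t *\<^sub>R D) ** cadj (X + t *\<^sub>R D))))\<^sup>2)) 0"
    unfolding socp_def by auto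
  show "inner (y - meas A (X ** cadj X)) (meas A (X ** cadj D + D ** cadj X)) = 0"
    using c1 unfolding g poly4_deriv(1)[OF refl] v0_def v1_def by simp
  show "0 \<le> (norm (meas A (X ** cadj D + D ** cadj X)))\<^sup>2
          - 2 * inner (y - meas A (X ** cadj X)) (meas A (D ** cadj D))"
    using c2 unfolding g poly4_deriv(2)[OF refl] v0_def v1_def v2_def by simp
qed


lemma final_arith:
  fixes n mu L eps la a t N g gy lr p r tau :: real
  assumes n: "n > 0" and mu: "mu > 0" and L: "L > 0" and eps: "eps \<ge> 0" and gap: "mu > L * eps"
    and la: "la \<ge> 0" and a: "a \<ge> 0" and t: "t \<ge> 0" and N: "N \<ge> 0" and g: "g \<ge> 0"
    and gy: "gy \<ge> 0" and lr: "lr > 0" and p: "p \<ge> 1" and r: "r \<ge> 1"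
    and E1: "t - eps * a \<le> la * N"
    and E2: "mu * a - L * t \<le> N / sqrt n"
    and E3: "N\<^sup>2 \<le> (2 * gy / (p + 2)) / lr * a\<^sup>2 + (sqrt (2 * r) * g * a + g * t)"
    and tau: "tau = 2 * ((1 + L * sqrt n * la) / (mu - L * eps))\<^sup>2 * gy / (n * lr) - 2"
    and ptau: "p > tau"
  shows "a + t \<le> (p + 2) / (p - tau) * ((1 + eps + sqrt n * la * (L + mu)) / (mu - L * eps))\<^sup>2
              * sqrt (2 * r) * g / n"
proof -
  define s where "s = sqrt n"
  have s: "s > 0" "s\<^sup>2 = n" using n by (auto simp: s_def)
  define d where "d = mu - L * eps"
  have d: "d > 0" using gap by (simp add: d_def)
  define C' where "C' = (1 + L * s * la) / d"
  define C where "C = (1 + eps + s * la * (L + mu)) / d"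
  have C'0: "C' \<ge> 0" using d L la s by (simp add: C'_def)
  have "L * t \<le> L * (eps * a + la * N)" using E1 L by (intro mult_left_mono) auto
  then have "d * a \<le> N / s + L * la * N" using E2 unfolding d_def s_def by (simp add: algebra_simps)
  also have "\<dots> = d * (C' * N / s)" using s d by (simp add: C'_def field_simps)
  finally have "d * a \<le> d * (C' * N / s)" .
  then have i: "a \<le> C' * N / s" using d by (metis mult_le_cancel_left_pos)
  have "a + t \<le> (1 + eps) * a + la * N" using E1 by (simp add: algebra_simps)
  also have "\<dots> \<le> (1 + eps) * (C' * N / s) + la * N" using i eps by (intro add_right_mono mult_left_mono) auto
  also have "\<dots> = C * N / s" using s d by (simp add: C'_def C_def field_simps) (simp add: d_def algebra_simps)
  finally have ii: "a + t \<le> C * N / s" .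
  have "a\<^sup>2 \<le> (C' * N / s)\<^sup>2" using i a by (intro power_mono) auto
  then have iii: "a\<^sup>2 \<le> C'\<^sup>2 * N\<^sup>2 / n" using s by (simp add: power_divide power_mult_distrib)
  have tau2: "tau + 2 = 2 * C'\<^sup>2 * gy / (n * lr)" using tau unfolding C'_def d_def s_def by simp
  have "(2 * gy / (p + 2)) / lr * a\<^sup>2 \<le> (2 * gy / (p + 2)) / lr * (C'\<^sup>2 * N\<^sup>2 / n)"
    using iii gy p lr by (intro mult_left_mono) auto
  also have "\<dots> = (tau + 2) / (p + 2) * N\<^sup>2" unfolding tau2 using n lr p by (simp add: field_simps)
  finally have iv1: "(2 * gy / (p + 2)) / lr * a\<^sup>2 \<le> (tau + 2) / (p + 2) * N\<^sup>2" .
  have sr: "sqrt (2 * r) \<ge> 1" using r by simp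
  have "1 * (g * t) \<le> sqrt (2 * r) * (g * t)" using sr g t by (intro mult_right_mono) auto
  then have "g * t \<le> sqrt (2 * r) * g * t" by (simp add: mult_ac)
  then have iv2: "sqrt (2 * r) * g * a + g * t \<le> sqrt (2 * r) * g * (a + t)" by (simp add: algebra_simps)
  have "N\<^sup>2 \<le> (tau + 2) / (p + 2) * N\<^sup>2 + sqrt (2 * r) * g * (a + t)" using E3 iv1 iv2 by linarith
  then have "N\<^sup>2 * ((p - tau) / (p + 2)) \<le> sqrt (2 * r) * g * (a + t)" using p by (simp add: field_simps)
  then have v1: "N\<^sup>2 \<le> (p + 2) / (p - tau) * (sqrt (2 * r) * g * (a + t))" using p ptau by (simp add: field_simps)
  have "(a + t)\<^sup>2 \<le> (C * N / s)\<^sup>2" using ii a t by (intro power_mono) auto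
  also have "\<dots> = C\<^sup>2 * N\<^sup>2 / n" using s by (simp add: power_divide power_mult_distrib)
  also have "\<dots> \<le> C\<^sup>2 * ((p + 2) / (p - tau) * (sqrt (2 * r) * g * (a + t))) / n"
    using v1 n by (intro divide_right_mono mult_left_mono) auto
  finally have v: "(a + t) * (a + t) \<le> (a + t) * (C\<^sup>2 * ((p + 2) / (p - tau) * (sqrt (2 * r) * g)) / n)"
    by (simp add: power2_eq_square mult_ac)
  have rhs0: "0 \<le> (p + 2) / (p - tau) * C\<^sup>2 * sqrt (2 * r) * g / n"
    using p ptau g n r by (intro divide_nonneg_pos mult_nonneg_nonneg) auto
  show ?thesis
  proof (cases "a + t = 0")
    case True then show ?thesis using rhs0 unfolding C_def d_def s_def by simp
  next
    case False
    then have "a + t > 0" using a t by simp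
    then have "a + t \<le> C\<^sup>2 * ((p + 2) / (p - tau) * (sqrt (2 * r) * g)) / n"
      using v by (metis mult_le_cancel_left_pos)
    then show ?thesis unfolding C_def d_def s_def by (simp add: mult_ac)
  qed
qed


definition outer :: "complex^'d \<Rightarrow> complex^'e \<Rightarrow> complex^'e^'d" where
  "outer x u = (\<chi> a b. x$a * cnj (u$b))"

definition Dj :: "complex^'d \<Rightarrow> 'p \<Rightarrow> complex^'p^'d" where
  "Dj u j = (\<chi> a b. if b = j then u$a else 0)"

lemma sum_delta_l: "(\<Sum>k\<in>UNIV. (if k = j then a k else 0) * b k) = a j * (b j::complex)" for j :: "'a::finite"
  by (subst sum.cong[OF refl, of _ _ "\<lambda>k. if k = j then a k * b k else 0"]) auto
lemma sum_delta_r: "(\<Sum>k\<in>UNIV. b k * (if k = j then a k else 0)) = b j * (a j::complex)" for j :: "'a::finite"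
  by (subst sum.cong[OF refl, of _ _ "\<lambda>k. if k = j then b k * a k else 0"]) auto
lemma sum_delta_l': "(\<Sum>k\<in>UNIV. (if j = k then a k else 0) * b k) = a j * (b j::complex)" for j :: "'a::finite"
  by (subst sum.cong[OF refl, of _ _ "\<lambda>k. if k = j then a k * b k else 0"]) auto
lemma sum_delta_r': "(\<Sum>k\<in>UNIV. b k * (if j = k then a k else 0)) = b j * (a j::complex)" for j :: "'a::finite"
  by (subst sum.cong[OF refl, of _ _ "\<lambda>k. if k = j then b k * a k else 0"]) auto

lemma cvec_scaleR_nth: "((c::real) *\<^sub>R (v::complex^'n))$i = complex_of_real c * v$i"
  by (simp only: vector_scaleR_component) (simp only: scaleR_conv_of_real)

lemma cadj_Dj: "cadj (Dj u j) $ k $ b = (if k = j then cnj (u$b) else 0)"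
  by (simp add: Dj_def)

lemma X_Dj: "(X::complex^'p^'d) ** cadj (Dj u j) = outer (column j X) u"
  unfolding matrix_matrix_mult_def cadj_Dj by (simp add: vec_eq_iff outer_def column_def sum_delta_r)

lemma Dj_X: "Dj u j ** cadj (X::complex^'p^'d) = outer u (column j X)"
  unfolding matrix_matrix_mult_def by (simp add: vec_eq_iff Dj_def outer_def column_def sum_delta_l)

lemma Dj_Dj: "Dj u j ** cadj (Dj u j :: complex^'p^'d) = outer u u"
  unfolding matrix_matrix_mult_def cadj_Dj by (simp add: vec_eq_iff Dj_def outer_def sum_delta_l)

lemma inF_Dj: "Fok F \<Longrightarrow> vin_F F u \<Longrightarrow> in_F F (Dj u j)"
  by (simp add: in_F_def vin_F_def Dj_def F_0)

lemma herm_entry: "hermitian A \<Longrightarrow> A$b$a = cnj (A$a$b)"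
  unfolding hermitian_def by (metis cadj_nth)

lemma inner_outer: assumes "hermitian (A::complex^'d^'d)" shows "inner A (outer x u) = inner u (A *v x)"
proof -
  have "inner A (outer x u) = (\<Sum>a\<in>UNIV. \<Sum>b\<in>UNIV. Re (cnj (u$b) * (A$b$a * x$a)))"
  proof -
    have h: "\<And>a b. cnj (A$a$b) = A$b$a" by (rule herm_entry[OF assms, symmetric])
    show ?thesis unfolding inner_mat outer_def by (simp add: h mult_ac)
  qed
  also have "\<dots> = (\<Sum>b\<in>UNIV. \<Sum>a\<in>UNIV. Re (cnj (u$b) * (A$b$a * x$a)))" by (rule sum.swap)
  also have "\<dots> = inner u (A *v x)"
    unfolding inner_cvec matrix_vector_mult_def by (simp add: sum_distrib_left Re_sum)
  finally show ?thesis .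
qed

lemma q_shift: assumes "hermitian S" "S ** X = 0"
  shows "inner (u - X *v c) (S *v (u - X *v c)) = inner u (S *v u)"
proof -
  have 1: "S *v (X *v c) = 0" using assms by (simp add: matrix_vector_mul_assoc)
  have "inner (X *v c) (S *v u) = inner u (S *v (X *v c))" by (rule herm_inner_swap[OF assms(1)])
  then show ?thesis using 1 by (simp add: matrix_vector_mult_diff_distrib inner_diff_left)
qed

lemma q_scale: "inner (c *\<^sub>R v) ((S::complex^'d^'d) *v (c *\<^sub>R v)) = c\<^sup>2 * inner v (S *v v)"
  by (simp add: mv_scaleR power2_eq_square)

context
  fixes U :: "complex^'r^'d" and lam :: "real^'r" and Z :: "complex^'d^'d"
  assumes orth: "cadj U ** U = mat 1"
    and lam_pos: "\<And>i. lam $ i > 0"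
    and Zeig: "Z = U ** (\<chi> i j. if i = j then complex_of_real (lam $ i) else 0) ** cadj U"
begin

lemma col_ULam: "column k (U ** (\<chi> i j. if i = j then complex_of_real (lam $ i) else 0)) = lam$k *\<^sub>R column k U"
  unfolding matrix_matrix_mult_def by (simp add: vec_eq_iff column_def sum_delta_r) (simp add: scaleR_conv_of_real mult.commute)

lemma ZU: "Z ** U = U ** (\<chi> i j. if i = j then complex_of_real (lam $ i) else 0)"
  unfolding Zeig by (simp add: matrix_mul_assoc[symmetric] orth)

lemma Z_eig: "Z *v column k U = lam$k *\<^sub>R column k U"
  using column_mm[of k Z U] ZU col_ULam by simp

lemma norm_col_U: "norm (column k U) = 1"
proof -
  have "inner (column k U) (column k U) = Re ((cadj U ** U)$k$k)"
    by (simp add: inner_cvec column_def matrix_matrix_mult_def Re_sum)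
  then have "inner (column k U) (column k U) = 1" using orth by (simp add: mat_def)
  then show ?thesis by (metis norm_eq_sqrt_inner real_sqrt_one)
qed

lemma eigset_sub: "{\<mu>::real. \<mu> \<noteq> 0 \<and> (\<exists>v. v \<noteq> 0 \<and> Z *v v = complex_of_real \<mu> *s v)} \<subseteq> range (\<lambda>k. lam$k)"
proof
  fix \<mu> assume "\<mu> \<in> {\<mu>::real. \<mu> \<noteq> 0 \<and> (\<exists>v. v \<noteq> 0 \<and> Z *v v = complex_of_real \<mu> *s v)}"
  then obtain v where mu0: "\<mu> \<noteq> 0" and v0: "v \<noteq> 0" and ev: "Z *v v = complex_of_real \<mu> *s v" by auto
  define L :: "complex^'r^'r" where "L = (\<chi> i j. if i = j then complex_of_real (lam $ i) else 0)"
  define w where "w = cadj U *v v"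
  have Zv: "Z *v v = U *v (L *v w)" unfolding Zeig w_def L_def by (simp add: matrix_vector_mul_assoc matrix_mul_assoc)
  have "complex_of_real \<mu> *s w = cadj U *v (Z *v v)"
    unfolding w_def ev by (simp add: vec_eq_iff matrix_vector_mult_def sum_distrib_left mult_ac)
  also have "\<dots> = L *v w" unfolding Zv by (simp add: matrix_vector_mul_assoc matrix_mul_assoc orth)
  finally have eq: "complex_of_real \<mu> *s w = L *v w" .
  have "w \<noteq> 0"
  proof
    assume "w = 0"
    then have "complex_of_real \<mu> *s v = 0" using Zv ev by simp
    then show False using mu0 v0 by (simp add: vec_eq_iff)
  qed
  then obtain k where wk: "w$k \<noteq> 0" by (auto simp: vec_eq_iff)
  have "(L *v w)$k = complex_of_real (lam$k) * w$k"
    unfolding L_def matrix_vector_mult_def by (simp add: sum_delta_l')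
  then have "complex_of_real \<mu> * w$k = complex_of_real (lam$k) * w$k" using eq by (metis vector_smult_component)
  then have "\<mu> = lam$k" using wk by simp
  then show "\<mu> \<in> range (\<lambda>k. lam$k)" by simp
qed

lemma lam_in_eigset: "lam$k \<in> {\<mu>::real. \<mu> \<noteq> 0 \<and> (\<exists>v. v \<noteq> 0 \<and> Z *v v = complex_of_real \<mu> *s v)}"
proof -
  have "column k U \<noteq> 0" using norm_col_U[of k] by auto
  moreover have "Z *v column k U = complex_of_real (lam$k) *s column k U"
    using Z_eig[of k] by (simp add: vec_eq_iff) (simp add: scaleR_conv_of_real)
  ultimately show ?thesis using lam_pos[of k] by auto
qed

lemma min_eig: "0 < min_nonzero_eig Z" "min_nonzero_eig Z \<le> lam$k"
proof -
  let ?E = "{\<mu>::real. \<mu> \<noteq> 0 \<and> (\<exists>v. v \<noteq> 0 \<and> Z *v v = complex_of_real \<mu> *s v)}"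
  have fin: "finite ?E" using eigset_sub by (rule finite_subset) simp
  have ne: "?E \<noteq> {}" using lam_in_eigset by blast
  have "Min ?E \<in> ?E" using fin ne by (rule Min_in)
  then have "Min ?E \<in> range (\<lambda>k. lam$k)" using eigset_sub by blast
  then show "0 < min_nonzero_eig Z" unfolding min_nonzero_eig_def using lam_pos by auto
  show "min_nonzero_eig Z \<le> lam$k" unfolding min_nonzero_eig_def using fin lam_in_eigset by (rule Min_le)
qed

end



theorem theorem5:
  fixes F :: "complex set"
    and A :: "'n::finite \<Rightarrow> complex^'d::finite^'d"
    and Xs :: "complex^'r::finite^'d"
    and Zs :: "complex^'d^'d"
    and U :: "complex^'r^'d"
    and lam :: "real^'r"
    and xi :: "real^'n"
    and y :: "real^'n"
    and eps :: real
    and la :: "real^'n"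
    and muT LT :: real
    and X :: "complex^'p::finite^'d"
  defines "n \<equiv> real CARD('n)"
    and "r \<equiv> real CARD('r)"
    and "p \<equiv> real CARD('p)"
    and "tau \<equiv> 2 * ((1 + LT * sqrt (real CARD('n)) * norm la) / (muT - LT * eps))\<^sup>2
                 * op_norm (meas_adj A y) / (real CARD('n) * min_nonzero_eig Zs) - 2"
  assumes F: "F = \<real> \<or> F = UNIV"
    and A_psd: "\<And>i. herm_F F (A i) \<and> psd (A i)"
    and Xs_F: "in_F F Xs"
    and Zs_def: "Zs = Xs ** cadj Xs"
    and U_F: "in_F F U"
    and U_orth: "cadj U ** U = mat 1"
    and lam_pos: "\<And>i. lam $ i > 0"
    and Zs_eig: "Zs = U ** (\<chi> i j. if i = j then complex_of_real (lam $ i) else 0) ** cadj U"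
    and y_def: "y = meas A Zs + xi"
    and eps_nonneg: "eps \<ge> 0"
    and dual1: "loewner_ge (P_Tperp U (meas_adj A la)) (projU_perp U)"
    and dual2: "fro_norm (P_T U (meas_adj A la)) \<le> eps"
    and muT_pos: "muT > 0" and LT_pos: "LT > 0"
    and isom: "\<And>H. herm_F F H \<Longrightarrow> psd (P_Tperp U H) \<Longrightarrow>
                 norm (meas A H) / sqrt n \<ge> muT * fro_norm (P_T U H) - LT * Re (trace (P_Tperp U H))"
    and gap: "muT > LT * eps"
    and p_gt: "p > tau"
    and crit: "socp F (\<lambda>W. (norm (y - meas A (W ** cadj W)))\<^sup>2) X"
  shows "fro_norm (X ** cadj X - Zs)
           \<le> fro_norm (P_T U (X ** cadj X - Zs)) + Re (trace (P_Tperp U (X ** cadj X)))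
       \<and> fro_norm (P_T U (X ** cadj X - Zs)) + Re (trace (P_Tperp U (X ** cadj X)))
           \<le> (p + 2) / (p - tau)
              * ((1 + eps + sqrt n * norm la * (LT + muT)) / (muT - LT * eps))\<^sup>2
              * sqrt (2 * r) * op_norm (meas_adj A xi) / n"
proof -
  have Fok: "Fok F" using F by (simp add: Fok_def)
  have hermA: "\<And>i. hermitian (A i)" and psdA: "\<And>i. psd (A i)" and inFA: "\<And>i. in_F F (A i)"
    using A_psd by (auto simp: herm_F_def)
  have XF: "in_F F X" using crit by (simp add: socp_def)
  define W where "W = X ** cadj X"
  define H where "H = W - Zs"
  define S where "S = meas_adj A (meas A W - y)"
  define Y where "Y = meas_adj A la"
  define G where "G = meas_adj A xi"
  define Q where "Q = projU_perp U"
  define V where "V = Q ** X"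
  define a where "a = norm (P_T U H)"
  define t where "t = Re (trace (P_Tperp U W))"
  define N where "N = norm (meas A H)"
  define g where "g = op_norm G"
  define gy where "gy = op_norm (meas_adj A y)"
  define lr where "lr = min_nonzero_eig Zs"
  define L :: "complex^'r^'r" where "L = (\<chi> i j. if i = j then complex_of_real (lam $ i) else 0)"
  have ZsL: "Zs = U ** L ** cadj U" using Zs_eig by (simp add: L_def)
  have inF_madj: "in_F F (meas_adj A z)" for z
    unfolding meas_adj_def by (intro inF_sum[OF Fok] inF_scaleR[OF Fok] inFA)
  have hermS: "hermitian S" unfolding S_def by (rule herm_meas_adj[OF hermA])
  have hermG: "hermitian G" unfolding G_def by (rule herm_meas_adj[OF hermA])
  have hermY: "hermitian Y" unfolding Y_def by (rule herm_meas_adj[OF hermA])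
  have inFS: "in_F F S" unfolding S_def by (rule inF_madj)
  have inFW: "in_F F W" unfolding W_def by (intro inF_mult[OF Fok] inF_cadj[OF Fok] XF)
  have inFZs: "in_F F Zs" unfolding Zs_def by (intro inF_mult[OF Fok] inF_cadj[OF Fok] Xs_F)
  have inFH: "in_F F H" unfolding H_def by (intro inF_diff[OF Fok] inFW inFZs)
  have hermW: "hermitian W" unfolding W_def by (rule herm_WW)
  have hermZs: "hermitian Zs" unfolding Zs_def by (rule herm_WW)
  have hermH: "hermitian H" using hermW hermZs by (simp add: H_def hermitian_def)
  have S_alt: "meas_adj A (y - meas A W) = - S" unfolding S_def by (simp add: meas_adj_diff)
  have MW: "meas_adj A (meas A W) = S + meas_adj A y" unfolding S_def by (simp add: meas_adj_diff)

  have SX: "S ** X = 0"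
  proof -
    have "in_F F (S ** X)" by (intro inF_mult[OF Fok] inFS XF)
    from crit_conds(1)[OF crit this]
    have "inner (y - meas A W) (meas A (X ** cadj (S ** X) + S ** X ** cadj X)) = 0" by (simp add: W_def)
    then have "inner (- S) (X ** cadj (S ** X) + S ** X ** cadj X) = 0" by (simp add: adjoint S_alt)
    then have 0: "inner S (X ** (cadj X ** S)) + inner S ((S ** X) ** cadj X) = 0"
      using hermS by (simp add: inner_add_right cadj_mult hermitian_def)
    have 1: "inner S (X ** (cadj X ** S)) = (norm (cadj X ** S))\<^sup>2"
      by (simp add: inner_move_left power2_norm_eq_inner)
    have 2: "inner S ((S ** X) ** cadj X) = (norm (S ** X))\<^sup>2"
      by (simp add: inner_move_right[of S "S ** X" "cadj X"] power2_norm_eq_inner)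
    have "(norm (S ** X))\<^sup>2 = 0" using 0 1 2
      by (metis add_nonneg_eq_0_iff zero_le_power2)
    then show ?thesis by simp
  qed
  have innerSW: "inner S W = 0"
    unfolding W_def by (simp add: inner_move_right[of S X "cadj X"] SX)

  have pge1: "p \<ge> 1" unfolding p_def by (simp add: Suc_le_eq)
  have so: "- (2 / (p + 2)) * gy * (norm u)\<^sup>2 \<le> inner u (S *v u)" if uF: "vin_F F u" for u
  proof -
    define b where "b = (\<lambda>i j. inner u (A i *v column j X))"
    have each: "0 \<le> (\<Sum>i\<in>UNIV. 4 * (b i j)\<^sup>2) + 2 * inner u (S *v u)" for j
    proof -
      from crit_conds(2)[OF crit inF_Dj[OF Fok uF, of j]]
      have c: "0 \<le> (norm (meas A (outer (column j X) u + outer u (column j X))))\<^sup>2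
          - 2 * inner (y - meas A W) (meas A (outer u u))"
        by (simp only: Dj_Dj) (simp add: X_Dj Dj_X W_def)
      have sw: "\<And>i. inner (column j X) (A i *v u) = inner u (A i *v column j X)"
        using herm_inner_swap[OF hermA] by blast
      have m: "meas A (outer (column j X) u + outer u (column j X)) = (\<chi> i. 2 * b i j)"
        unfolding b_def
        by (simp add: vec_eq_iff meas_nth inner_add_right inner_outer[OF hermA] sw)
      have n2: "(norm (meas A (outer (column j X) u + outer u (column j X))))\<^sup>2 = (\<Sum>i\<in>UNIV. 4 * (b i j)\<^sup>2)"
        unfolding m power2_norm_eq_inner by (simp add: inner_vec_def power2_eq_square)
      have "inner (y - meas A W) (meas A (outer u u)) = - inner u (S *v u)"
        by (simp add: adjoint S_alt inner_outer[OF hermS])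
      then show ?thesis using c n2 by simp
    qed
    have "0 \<le> (\<Sum>j\<in>(UNIV::'p set). (\<Sum>i\<in>UNIV. 4 * (b i j)\<^sup>2) + 2 * inner u (S *v u))"
      by (intro sum_nonneg each)
    also have "\<dots> = (\<Sum>i\<in>UNIV. \<Sum>j\<in>UNIV. 4 * (b i j)\<^sup>2) + 2 * p * inner u (S *v u)"
      unfolding p_def by (simp add: sum.distrib sum.swap[of _ "UNIV::'p set"])
    finally have s1: "0 \<le> (\<Sum>i\<in>UNIV. \<Sum>j\<in>UNIV. 4 * (b i j)\<^sup>2) + 2 * p * inner u (S *v u)" .
    have "(\<Sum>j\<in>UNIV. 4 * (b i j)\<^sup>2) \<le> 4 * (inner u (A i *v u) * meas A W $ i)" for i
    proof -
      have "(\<Sum>j\<in>UNIV. 4 * (b i j)\<^sup>2) \<le> (\<Sum>j\<in>UNIV. 4 * (inner u (A i *v u) * inner (column j X) (A i *v column j X)))"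
        unfolding b_def by (intro sum_mono mult_left_mono psd_CS psdA) auto
      also have "\<dots> = 4 * (inner u (A i *v u) * meas A W $ i)"
        by (simp add: meas_nth W_def inner_WW sum_distrib_left)
      finally show ?thesis .
    qed
    then have "(\<Sum>i\<in>UNIV. \<Sum>j\<in>UNIV. 4 * (b i j)\<^sup>2) \<le> (\<Sum>i\<in>UNIV. 4 * (inner u (A i *v u) * meas A W $ i))"
      by (rule sum_mono)
    also have "\<dots> = 4 * inner u (meas_adj A (meas A W) *v u)"
      by (simp add: q_meas_adj sum_distrib_left mult_ac)
    also have "\<dots> = 4 * inner u (S *v u) + 4 * inner u (meas_adj A y *v u)"
      by (simp add: MW matrix_vector_mult_add_rdistrib inner_add_right)
    also have "\<dots> \<le> 4 * inner u (S *v u) + 4 * (gy * (norm u)\<^sup>2)"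
      using q_le_op[of u "meas_adj A y"] unfolding gy_def by simp
    finally have "0 \<le> 4 * inner u (S *v u) + 4 * (gy * (norm u)\<^sup>2) + 2 * p * inner u (S *v u)"
      using s1 by simp
    then have "- (4 * (gy * (norm u)\<^sup>2)) \<le> (2 * p + 4) * inner u (S *v u)" by (simp add: algebra_simps)
    moreover have pos: "0 < 2 * p + 4" using pge1 by simp
    ultimately have "- (4 * (gy * (norm u)\<^sup>2)) / (2 * p + 4) \<le> inner u (S *v u)"
      by (metis pos_divide_le_eq mult.commute)
    moreover have "- (4 * (gy * (norm u)\<^sup>2)) / (2 * p + 4) = - (2 / (p + 2)) * gy * (norm u)\<^sup>2"
      using pge1 by (simp add: field_simps)
    ultimately show ?thesis by simp
  qed

  have lr_pos: "0 < lr" and lr_le: "\<And>k. lr \<le> lam$k"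
    using min_eig[OF U_orth lam_pos Zs_eig] unfolding lr_def by auto
  have gy0: "0 \<le> gy" unfolding gy_def by (rule op_norm_nonneg)
  define dl where "dl = 2 * gy / (p + 2)"
  have dl0: "0 \<le> dl" unfolding dl_def using gy0 pge1 by simp
  have SZ_sum: "inner S Zs = (\<Sum>k\<in>UNIV. lam$k * inner (column k U) (S *v column k U))"
  proof -
    have "inner S Zs = inner (S ** U) (U ** L)"
      unfolding ZsL using inner_move_right[of S "U ** L" "cadj U"] by simp
    also have "\<dots> = (\<Sum>k\<in>UNIV. inner (S *v column k U) (lam$k *\<^sub>R column k U))"
      unfolding inner_cols[of "S ** U"] column_mm[of _ S U] L_def col_ULam[OF U_orth lam_pos Zs_eig] by simp
    finally show ?thesis by (simp add: inner_commute)
  qed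
  have term_k: "- (lam$k * inner (column k U) (S *v column k U)) \<le> dl / lr * (norm (H *v column k U))\<^sup>2" for k
  proof -
    define uk where "uk = column k U"
    define lk where "lk = lam$k"
    have lk0: "0 < lk" unfolding lk_def by (rule lam_pos)
    define c where "c = (1 / lk) *\<^sub>R (cadj X *v uk)"
    have Zu: "Zs *v uk = lk *\<^sub>R uk" unfolding uk_def lk_def by (rule Z_eig[OF U_orth lam_pos Zs_eig])
    have "uk - X *v c = - (1 / lk) *\<^sub>R (H *v uk)"
      unfolding c_def H_def W_def using lk0
      by (simp add: mv_scaleR matrix_vector_mul_assoc matrix_vector_mult_diff_rdistrib Zu scaleR_diff_right)
    then have "inner uk (S *v uk) = inner (- (1 / lk) *\<^sub>R (H *v uk)) (S *v (- (1 / lk) *\<^sub>R (H *v uk)))"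
      using q_shift[OF hermS SX, of uk c] by simp
    also have "\<dots> = (1 / lk)\<^sup>2 * inner (H *v uk) (S *v (H *v uk))"
      using q_scale[of "- (1 / lk)" "H *v uk" S] by simp
    finally have q: "inner uk (S *v uk) = (1 / lk)\<^sup>2 * inner (H *v uk) (S *v (H *v uk))" .
    have vF: "vin_F F (H *v uk)" unfolding uk_def by (intro vinF_mv[OF Fok] inFH vinF_col[OF Fok] U_F)
    have "- (lk * inner uk (S *v uk)) = - (1 / lk) * inner (H *v uk) (S *v (H *v uk))"
      using lk0 unfolding q by (simp add: power2_eq_square)
    also have "\<dots> \<le> (1 / lk) * (dl * (norm (H *v uk))\<^sup>2)"
    proof -
      have e: "(2 / (p + 2)) * gy * (norm (H *v uk))\<^sup>2 = dl * (norm (H *v uk))\<^sup>2" by (simp add: dl_def)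
      have "- inner (H *v uk) (S *v (H *v uk)) \<le> dl * (norm (H *v uk))\<^sup>2"
        using so[OF vF] e by linarith
      then have "(1 / lk) * (- inner (H *v uk) (S *v (H *v uk))) \<le> (1 / lk) * (dl * (norm (H *v uk))\<^sup>2)"
        using lk0 by (intro mult_left_mono) auto
      then show ?thesis by simp
    qed
    also have "\<dots> \<le> (1 / lr) * (dl * (norm (H *v uk))\<^sup>2)"
      using lr_pos lr_le[of k] lk_def dl0 by (intro mult_right_mono) (auto simp: frac_le)
    finally show ?thesis by (simp add: uk_def lk_def)
  qed
  have "- inner S Zs \<le> (\<Sum>k\<in>UNIV. dl / lr * (norm (H *v column k U))\<^sup>2)"
    unfolding SZ_sum using term_k by (simp add: sum_negf[symmetric] sum_mono)
  also have "\<dots> = dl / lr * (norm (H ** U))\<^sup>2"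
    by (simp add: norm_sq_cols[of "H ** U"] column_mm sum_distrib_left)
  also have "\<dots> \<le> dl / lr * a\<^sup>2"
  proof -
    have "norm (H ** U) \<le> a"
      unfolding a_def using norm_PT_sq[OF U_orth, of H] norm_MP[OF U_orth, of H]
      by (metis le_add_same_cancel1 norm_ge_zero power2_le_imp_le zero_le_power2)
    then show ?thesis using dl0 lr_pos by (intro mult_left_mono power_mono) auto
  qed
  finally have SZ_bound: "- inner S Zs \<le> dl / lr * a\<^sup>2" .

  have cQ: "cadj Q = Q" unfolding Q_def by (rule cadjQ[OF U_orth])
  have QQ': "Q ** Q = Q" unfolding Q_def by (rule QQ[OF U_orth])
  have PTW: "P_Tperp U W = V ** cadj V"
    unfolding P_Tperp_def W_def V_def Q_def[symmetric] by (simp add: cadj_mult cQ matrix_mul_assoc)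
  have PTZ: "P_Tperp U Zs = 0"
    unfolding P_Tperp_def ZsL Q_def by (simp add: matrix_mul_assoc QU[OF U_orth])
  have PTH: "P_Tperp U H = V ** cadj V"
    using PTW PTZ unfolding H_def P_Tperp_def by (simp add: mm_diff_l mm_diff_r)
  have t_eq: "t = (norm V)\<^sup>2"
    unfolding t_def PTW using inner_trace[of "cadj V" "cadj V"]
    by (simp add: power2_norm_eq_inner[symmetric])
  have t0: "0 \<le> t" using t_eq by simp
  have Hdec: "H = P_T U H + V ** cadj V"
    using PT_plus_PTperp[OF U_orth, of H] PTH by simp
  have QV: "Q ** V = V" unfolding V_def by (simp add: matrix_mul_assoc QQ')
  have PTVV: "P_Tperp U (V ** cadj V) = V ** cadj V"
  proof -
    have "cadj V ** Q = cadj V" using QV cQ by (metis cadj_mult)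
    then show ?thesis unfolding P_Tperp_def Q_def[symmetric] using QV
      by (metis matrix_mul_assoc)
  qed
  have colV: "Q *v column j V = column j V" for j
    using QV column_mm[of j Q V] by simp
  have a0: "0 \<le> a" unfolding a_def by simp
  have N0: "0 \<le> N" unfolding N_def by simp
  have E1: "t - eps * a \<le> norm la * N"
  proof -
    have "inner Y H = inner la (meas A H)" unfolding Y_def by (simp add: adjoint)
    also have "\<dots> \<le> norm la * N" unfolding N_def by (rule norm_cauchy_schwarz)
    finally have 1: "inner Y H \<le> norm la * N" .
    have 2: "inner Y H = inner (P_T U Y) (P_T U H) + inner (P_Tperp U Y) (V ** cadj V)"
      using Hdec inner_PT[OF U_orth, of Y H] inner_PTperp[OF U_orth, of Y "V ** cadj V"] PTVV
      by (metis inner_add_right)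
    have "- (eps * a) \<le> - (norm (P_T U Y) * a)"
      using dual2 a0 unfolding Y_def fro_norm_eq by (simp add: mult_right_mono)
    also have "\<dots> \<le> inner (P_T U Y) (P_T U H)"
      unfolding a_def using norm_cauchy_schwarz[of "- P_T U Y" "P_T U H"] by simp
    finally have 3: "- (eps * a) \<le> inner (P_T U Y) (P_T U H)" .
    have psdD: "psd (P_Tperp U Y - Q)" using dual1 unfolding Y_def Q_def loewner_ge_def by simp
    have "t = (\<Sum>j\<in>UNIV. inner (column j V) (Q *v column j V))"
      unfolding t_eq norm_sq_cols colV by (simp add: power2_norm_eq_inner)
    also have "\<dots> \<le> (\<Sum>j\<in>UNIV. inner (column j V) (P_Tperp U Y *v column j V))"
    proof (rule sum_mono)
      fix j
      have "0 \<le> inner (column j V) ((P_Tperp U Y - Q) *v column j V)"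
        using psdD unfolding psd_iff by blast
      then show "inner (column j V) (Q *v column j V) \<le> inner (column j V) (P_Tperp U Y *v column j V)"
        by (simp add: matrix_vector_mult_diff_rdistrib inner_diff_right)
    qed
    also have "\<dots> = inner (P_Tperp U Y) (V ** cadj V)" by (simp add: inner_WW)
    finally have 4: "t \<le> inner (P_Tperp U Y) (V ** cadj V)" .
    show ?thesis using 1 2 3 4 by linarith
  qed
  have E2: "muT * a - LT * t \<le> N / sqrt n"
  proof -
    have "herm_F F H" using inFH hermH by (simp add: herm_F_def)
    moreover have "psd (P_Tperp U H)" unfolding PTH by (rule psd_WW)
    ultimately have "norm (meas A H) / sqrt n \<ge> muT * fro_norm (P_T U H) - LT * Re (trace (P_Tperp U H))"
      by (rule isom)
    moreover have "Re (trace (P_Tperp U H)) = t" unfolding t_def PTH PTW ..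
    ultimately show ?thesis unfolding a_def N_def fro_norm_eq by simp
  qed

  have N2: "N\<^sup>2 = - inner S Zs + inner G H"
  proof -
    have mH: "meas A H = (meas A W - y) + xi" unfolding H_def y_def by (simp add: meas_diff)
    have "N\<^sup>2 = inner (meas A H) (meas A H)" unfolding N_def by (simp add: power2_norm_eq_inner)
    also have "\<dots> = inner S H + inner G H"
      by (subst (1) mH) (simp add: inner_add_left adjoint S_def G_def meas_adj_add)
    also have "inner S H = - inner S Zs" unfolding H_def by (simp add: inner_diff_right innerSW)
    finally show ?thesis .
  qed
  have g0: "0 \<le> g" unfolding g_def by (rule op_norm_nonneg)
  have r1: "r \<ge> 1" unfolding r_def by (simp add: Suc_le_eq)
  have GH: "inner G H \<le> sqrt (2 * r) * g * a + g * t"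
  proof -
    have dec: "inner G H = inner (P_T U G) (P_T U H) + inner G (V ** cadj V)"
      using Hdec inner_PT[OF U_orth, of G H] by (metis inner_add_right)
    have "(norm (G ** U))\<^sup>2 = (\<Sum>k\<in>UNIV. (norm (G *v column k U))\<^sup>2)"
      by (simp add: norm_sq_cols[of "G ** U"] column_mm)
    also have "\<dots> \<le> (\<Sum>k\<in>(UNIV::'r set). g\<^sup>2)"
    proof (rule sum_mono)
      fix k
      have "norm (G *v column k U) \<le> g * norm (column k U)" unfolding g_def by (rule norm_mv_le)
      then have "norm (G *v column k U) \<le> g" using norm_col_U[OF U_orth lam_pos Zs_eig] by simp
      then show "(norm (G *v column k U))\<^sup>2 \<le> g\<^sup>2" by (simp add: power_mono)
    qed
    also have "\<dots> = r * g\<^sup>2" unfolding r_def by simp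
    finally have GU: "(norm (G ** U))\<^sup>2 \<le> r * g\<^sup>2" .
    have "(norm (P_T U G))\<^sup>2 \<le> 2 * (norm (G ** U))\<^sup>2"
    proof -
      have "norm (projU U ** G ** projU_perp U) \<le> norm (G ** projU U)" by (rule norm_PGQ_le[OF U_orth hermG])
      then have "(norm (projU U ** G ** projU_perp U))\<^sup>2 \<le> (norm (G ** projU U))\<^sup>2" by (simp add: power_mono)
      then show ?thesis using norm_PT_sq[OF U_orth, of G] norm_MP[OF U_orth, of G] by simp
    qed
    also have "\<dots> \<le> (sqrt (2 * r) * g)\<^sup>2" using GU r1 by (simp add: power_mult_distrib)
    finally have sq: "(norm (P_T U G))\<^sup>2 \<le> (sqrt (2 * r) * g)\<^sup>2" .
    have "0 \<le> sqrt (2 * r) * g" using g0 r1 by simp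
    then have "norm (P_T U G) \<le> sqrt (2 * r) * g" by (rule power2_le_imp_le[OF sq])
    then have i1: "inner (P_T U G) (P_T U H) \<le> sqrt (2 * r) * g * a"
      unfolding a_def using norm_cauchy_schwarz[of "P_T U G" "P_T U H"] by (meson order_trans mult_right_mono norm_ge_zero)
    have "inner G (V ** cadj V) = (\<Sum>j\<in>UNIV. inner (column j V) (G *v column j V))" by (rule inner_WW)
    also have "\<dots> \<le> (\<Sum>j\<in>UNIV. g * (norm (column j V))\<^sup>2)"
      by (intro sum_mono) (metis abs_le_D1 g_def q_le_op)
    also have "\<dots> = g * t" unfolding t_eq norm_sq_cols by (simp add: sum_distrib_left)
    finally show ?thesis using dec i1 by linarith
  qed
  have HN: "norm H \<le> a + t"
  proof -
    have "norm H \<le> norm (P_T U H) + norm (V ** cadj V)" using Hdec by (metis norm_triangle_ineq)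
    also have "\<dots> \<le> a + t" unfolding a_def t_eq using norm_BBt[of V] by simp
    finally show ?thesis .
  qed
  have E3: "N\<^sup>2 \<le> (2 * gy / (p + 2)) / lr * a\<^sup>2 + (sqrt (2 * r) * g * a + g * t)"
    using N2 SZ_bound GH unfolding dl_def by linarith
  have tau': "tau = 2 * ((1 + LT * sqrt n * norm la) / (muT - LT * eps))\<^sup>2 * gy / (n * lr) - 2"
    unfolding tau_def gy_def lr_def n_def ..
  have main: "a + t \<le> (p + 2) / (p - tau) * ((1 + eps + sqrt n * norm la * (LT + muT)) / (muT - LT * eps))\<^sup>2
              * sqrt (2 * r) * g / n"
    by (rule final_arith[OF _ muT_pos LT_pos eps_nonneg gap _ a0 t0 N0 g0 gy0 lr_pos pge1 r1 E1 E2 E3 tau' p_gt])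
      (auto simp: n_def)
  show ?thesis
    using HN main unfolding fro_norm_eq a_def t_def g_def G_def H_def W_def by simp
qed

end
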